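(* Fix $h\in\{2,\dots,H\}$ and $N\ge N_{KD}$, and assume $f^\star\in\mathcal{F}_N$. For any $\delta\in(0,1)$, with probability at least $1-\delta$, the empirical risk minimizer $\hat f\in\arg\min_{f\in\mathcal{F}_N}\sum_{i=1}^n(f(x_i,a_i,x_i')-y_i)^2$ based on $n$ i.i.d. samples $(x_i,a_i,x_i',y_i)$ from $D$ satisfies $$\mathbb{E}_D\big[(\hat f(x,a,x')-f^\star(x,a,x'))^2\big]\le\Delta_{reg},\qquad\Delta_{reg}=\frac{16(\ln|\Phi_N|+N^2|\mathcal{A}|\ln(n)+\ln(2/\delta))}{n}.$$
   Context: Block MDP: horizon $H$; finite latent states $\mathcal{S}=\sqcup_h\mathcal{S}_h$; countable observations $\mathcal{X}=\sqcup_h\mathcal{X}_h$; finite actions $\mathcal{A}$; transitions $T(\cdot\mid s,a)\in\Delta(\mathcal{S}_{h+1})$; emissions $q(\cdot\mid s)\in\Delta(\mathcal{X}_h)$ with disjoint supports, decoder $g^\star$; $T(x'\mid x,a)=q(x'\mid g^\star(x'))T(g^\star(x')\mid g^\star(x),a)$. $\Psi_{h-1}$ is a finite set of policies forming an $\alpha$-policy cover of $\mathcal{S}_{h-1}$. Distribution $D$: draw two independent transitions $(x_j,a_j,x_j')$, each by rolling in to $x_j\in\mathcal{X}_{h-1}$ with a uniformly chosen policy from $\Psi_{h-1}$, taking $a_j\sim\mathrm{Unf}(\mathcal{A})$, $x_j'\sim T(\cdot\mid x_j,a_j)$; with probability $1/2$ output $(x_1,a_1,x_1',1)$, else $(x_1,a_1,x_2',0)$.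 $\rho_h$ is the marginal law of $x_1'$, and $f^\star(x,a,x')=\frac{T(g^\star(x')\mid g^\star(x),a)}{T(g^\star(x')\mid g^\star(x),a)+\rho_h(g^\star(x'))}$ is the Bayes optimal square-loss predictor. $\Phi_N$ is a finite class of maps $\mathcal{X}\to[N]$; $\mathcal{W}_N$ is all functions $[N]\times\mathcal{A}\times[N]\to[0,1]$; $\mathcal{F}_N=\{(x,a,x')\mapsto w(\phi^F(x),a,\phi^B(x')):w\in\mathcal{W}_N,\phi^F,\phi^B\in\Phi_N\}$. $N_{KD}$ is the maximum over $h$ of the number of kinematic-inseparability classes in $\mathcal{X}_h$. *)

theory Defs
  imports "HOL-Probability.Probability"
begin

text \<open>Latent states of type 's (finite), observations of type 'x
(countable), actions of type 'a (finite). The layer of a state is ls s, the layer of an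
observation is lx x (layers 1..H). Transitions T s a, emissions q s, decoder g,
initial latent distribution mu (supported on layer 1).\<close>

text \<open>Observation-level transition T(x'|x,a) = q(x'|g x') T(g x'|g x,a).\<close>
definition obs_trans :: "('s \<Rightarrow> 'a \<Rightarrow> 's pmf) \<Rightarrow> ('s \<Rightarrow> 'x pmf) \<Rightarrow> ('x \<Rightarrow> 's) \<Rightarrow> 'x \<Rightarrow> 'a \<Rightarrow> 'x pmf" where
  "obs_trans T q g x a = bind_pmf (T (g x) a) q"

text \<open>Index k represents layer k+1.\<close>
primrec obs_dist_aux :: "'s pmf \<Rightarrow> ('s \<Rightarrow> 'a \<Rightarrow> 's pmf) \<Rightarrow> ('s \<Rightarrow> 'x pmf) \<Rightarrow> ('x \<Rightarrow> 's)
    \<Rightarrow> ('x \<Rightarrow> 'a pmf) \<Rightarrow> nat \<Rightarrow> 'x pmf" where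
  "obs_dist_aux mu T q g p 0 = bind_pmf mu q"
| "obs_dist_aux mu T q g p (Suc k) =
     bind_pmf (obs_dist_aux mu T q g p k) (\<lambda>x. bind_pmf (p x) (\<lambda>a. obs_trans T q g x a))"

definition rollin :: "'s pmf \<Rightarrow> ('s \<Rightarrow> 'a \<Rightarrow> 's pmf) \<Rightarrow> ('s \<Rightarrow> 'x pmf) \<Rightarrow> ('x \<Rightarrow> 's)
    \<Rightarrow> ('x \<Rightarrow> 'a pmf) \<Rightarrow> nat \<Rightarrow> 'x pmf" where
  "rollin mu T q g p h = obs_dist_aux mu T q g p (h - 1)"

definition reach :: "'s pmf \<Rightarrow> ('s \<Rightarrow> 'a \<Rightarrow> 's pmf) \<Rightarrow> ('s \<Rightarrow> 'x pmf) \<Rightarrow> ('x \<Rightarrow> 's)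
    \<Rightarrow> ('x \<Rightarrow> 'a pmf) \<Rightarrow> nat \<Rightarrow> 's \<Rightarrow> real" where
  "reach mu T q g p h s = measure_pmf.prob (rollin mu T q g p h) {x. g x = s}"

definition policy_cover :: "'s pmf \<Rightarrow> ('s \<Rightarrow> 'a \<Rightarrow> 's pmf) \<Rightarrow> ('s \<Rightarrow> 'x pmf) \<Rightarrow> ('x \<Rightarrow> 's)
    \<Rightarrow> ('s \<Rightarrow> nat) \<Rightarrow> ('x \<Rightarrow> 'a pmf) set \<Rightarrow> real \<Rightarrow> nat \<Rightarrow> bool" where
  "policy_cover mu T q g ls Psi alpha h \<longleftrightarrow>
     (\<forall>s. ls s = h \<longrightarrow>
        (\<exists>p\<in>Psi. reach mu T q g p h s \<ge> alpha * (SUP p'. reach mu T q g p' h s)))"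

definition trans_sample :: "'s pmf \<Rightarrow> ('s \<Rightarrow> 'a::finite \<Rightarrow> 's pmf) \<Rightarrow> ('s \<Rightarrow> 'x pmf) \<Rightarrow> ('x \<Rightarrow> 's)
    \<Rightarrow> ('x \<Rightarrow> 'a pmf) set \<Rightarrow> nat \<Rightarrow> ('x \<times> 'a \<times> 'x) pmf" where
  "trans_sample mu T q g Psi h =
     bind_pmf (pmf_of_set Psi) (\<lambda>p.
       bind_pmf (rollin mu T q g p (h - 1)) (\<lambda>x.
         bind_pmf (pmf_of_set UNIV) (\<lambda>a.
           map_pmf (\<lambda>x'. (x, a, x')) (obs_trans T q g x a))))"

definition contrastive_dist :: "'s pmf \<Rightarrow> ('s \<Rightarrow> 'a::finite \<Rightarrow> 's pmf) \<Rightarrow> ('s \<Rightarrow> 'x pmf) \<Rightarrow> ('x \<Rightarrow> 's)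
    \<Rightarrow> ('x \<Rightarrow> 'a pmf) set \<Rightarrow> nat \<Rightarrow> ('x \<times> 'a \<times> 'x \<times> real) pmf" where
  "contrastive_dist mu T q g Psi h =
     bind_pmf (trans_sample mu T q g Psi h) (\<lambda>(x1, a1, x1').
       bind_pmf (trans_sample mu T q g Psi h) (\<lambda>(x2, a2, x2').
         map_pmf (\<lambda>b. if b then (x1, a1, x1', 1) else (x1, a1, x2', 0)) (bernoulli_pmf (1/2))))"

definition rho :: "'s pmf \<Rightarrow> ('s \<Rightarrow> 'a::finite \<Rightarrow> 's pmf) \<Rightarrow> ('s \<Rightarrow> 'x pmf) \<Rightarrow> ('x \<Rightarrow> 's)
    \<Rightarrow> ('x \<Rightarrow> 'a pmf) set \<Rightarrow> nat \<Rightarrow> 's \<Rightarrow> real" where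
  "rho mu T q g Psi h s = measure_pmf.prob (trans_sample mu T q g Psi h) {(x, a, x'). g x' = s}"

definition fstar :: "'s pmf \<Rightarrow> ('s \<Rightarrow> 'a::finite \<Rightarrow> 's pmf) \<Rightarrow> ('s \<Rightarrow> 'x pmf) \<Rightarrow> ('x \<Rightarrow> 's)
    \<Rightarrow> ('x \<Rightarrow> 'a pmf) set \<Rightarrow> nat \<Rightarrow> 'x \<Rightarrow> 'a \<Rightarrow> 'x \<Rightarrow> real" where
  "fstar mu T q g Psi h x a x' =
     pmf (T (g x) a) (g x') / (pmf (T (g x) a) (g x') + rho mu T q g Psi h (g x'))"

text \<open>[N] is rendered as {0..<N}. W_N: functions [N] x A x [N] -> [0,1]
(values outside [N] are irrelevant after composition with maps into [N]).\<close>
definition W_set :: "nat \<Rightarrow> (nat \<Rightarrow> 'a \<Rightarrow> nat \<Rightarrow> real) set" where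
  "W_set N = {w. \<forall>i<N. \<forall>a. \<forall>j<N. 0 \<le> w i a j \<and> w i a j \<le> 1}"

definition F_set :: "nat \<Rightarrow> ('x \<Rightarrow> nat) set \<Rightarrow> ('x \<Rightarrow> 'a \<Rightarrow> 'x \<Rightarrow> real) set" where
  "F_set N Phi = {f. \<exists>w\<in>W_set N. \<exists>phiF\<in>Phi. \<exists>phiB\<in>Phi.
                     f = (\<lambda>x a x'. w (phiF x) a (phiB x'))}"

definition emp_risk :: "('x \<Rightarrow> 'a \<Rightarrow> 'x \<Rightarrow> real) \<Rightarrow> nat \<Rightarrow> (nat \<Rightarrow> 'x \<times> 'a \<times> 'x \<times> real) \<Rightarrow> real" where
  "emp_risk f n S = (\<Sum>i<n. (case S i of (x, a, x', y) \<Rightarrow> (f x a x' - y)\<^sup>2))"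

text \<open>Forward: identical observation-level transition
kernels for every action (only meaningful below the last layer H).\<close>
definition posterior :: "('s \<Rightarrow> 'a \<Rightarrow> 's pmf) \<Rightarrow> ('s \<Rightarrow> 'x pmf) \<Rightarrow> ('x \<Rightarrow> 's)
    \<Rightarrow> ('x \<times> 'a) pmf \<Rightarrow> 'x \<Rightarrow> 'x \<times> 'a \<Rightarrow> real" where
  "posterior T q g u x' = (\<lambda>(x, a). pmf u (x, a) * pmf (obs_trans T q g x a) x' /
      measure_pmf.expectation u (\<lambda>(z, b). pmf (obs_trans T q g z b) x'))"

definition kin_insep :: "nat \<Rightarrow> ('s \<Rightarrow> 'a \<Rightarrow> 's pmf) \<Rightarrow> ('s \<Rightarrow> 'x pmf) \<Rightarrow> ('x \<Rightarrow> 's)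
    \<Rightarrow> ('x \<Rightarrow> nat) \<Rightarrow> 'x \<Rightarrow> 'x \<Rightarrow> bool" where
  "kin_insep H T q g lx x1 x2 \<longleftrightarrow>
     lx x1 = lx x2 \<and>
     (lx x1 < H \<longrightarrow> (\<forall>a. obs_trans T q g x1 a = obs_trans T q g x2 a)) \<and>
     (\<forall>u. set_pmf u = {x. lx x = lx x1 - 1} \<times> UNIV \<longrightarrow>
          posterior T q g u x1 = posterior T q g u x2)"

definition N_KD :: "nat \<Rightarrow> ('s \<Rightarrow> 'a \<Rightarrow> 's pmf) \<Rightarrow> ('s \<Rightarrow> 'x pmf) \<Rightarrow> ('x \<Rightarrow> 's)
    \<Rightarrow> ('x \<Rightarrow> nat) \<Rightarrow> nat" where
  "N_KD H T q g lx = Max ((\<lambda>h. card ({x. lx x = h} //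
       {(x1, x2). lx x1 = h \<and> lx x2 = h \<and> kin_insep H T q g lx x1 x2})) ` {1..H})"

end

theory Submission imports Defs begin

lemma int_bind_pmf:
  fixes f :: "'b \<Rightarrow> real"
  assumes "\<And>x. \<bar>f x\<bar> \<le> B"
  shows "measure_pmf.expectation (bind_pmf M N) f = measure_pmf.expectation M (\<lambda>x. measure_pmf.expectation (N x) f)"
  unfolding measure_pmf_bind
  apply (rule integral_bind[where K="count_space UNIV" and B=B and B'=1])
  using assms measurable_measure_pmf[of N] by (auto intro: prob_space.finite_measure prob_space_measure_pmf)

lemma int_bounded:
  fixes f :: "'b \<Rightarrow> real"
  assumes "\<And>x. \<bar>f x\<bar> \<le> B"
  shows "integrable (measure_pmf M) f"
  apply (rule measure_pmf.integrable_const_bound[where B=B]) using assms by auto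

lemma exp_bounded:
  fixes f :: "'b \<Rightarrow> real"
  assumes "\<And>x. \<bar>f x\<bar> \<le> B"
  shows "\<bar>measure_pmf.expectation M f\<bar> \<le> B"
proof -
  have "\<bar>measure_pmf.expectation M f\<bar> \<le> measure_pmf.expectation M (\<lambda>x. \<bar>f x\<bar>)"
    by (rule integral_abs_bound)
  also have "\<dots> \<le> measure_pmf.expectation M (\<lambda>x. B)"
    by (rule integral_mono) (auto intro: int_bounded assms)
  also have "\<dots> = B" by simp
  finally show ?thesis .
qed

definition Pxa :: "'s pmf \<Rightarrow> ('s \<Rightarrow> 'a::finite \<Rightarrow> 's pmf) \<Rightarrow> ('s \<Rightarrow> 'x pmf) \<Rightarrow> ('x \<Rightarrow> 's)
    \<Rightarrow> ('x \<Rightarrow> 'a pmf) set \<Rightarrow> nat \<Rightarrow> ('x \<times> 'a) pmf" where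
  "Pxa mu T q g Psi h = bind_pmf (pmf_of_set Psi) (\<lambda>p. bind_pmf (rollin mu T q g p (h - 1))
      (\<lambda>x. map_pmf (\<lambda>a. (x, a)) (pmf_of_set UNIV)))"

lemma trans_sample_eq:
  "trans_sample mu T q g Psi h = bind_pmf (Pxa mu T q g Psi h)
     (\<lambda>(x, a). map_pmf (\<lambda>x'. (x, a, x')) (obs_trans T q g x a))"
  by (simp add: trans_sample_def Pxa_def bind_assoc_pmf map_pmf_def bind_return_pmf)


lemma exp_le_quad:
  fixes t :: real
  assumes "\<bar>t\<bar> \<le> 1"
  shows "exp t \<le> 1 + t + t\<^sup>2"
proof (cases "0 \<le> t")
  case True
  then show ?thesis using exp_bound[of t] assms by auto
next
  case False
  define s where "s = - t"
  have s0: "0 \<le> s" using False s_def by simp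
  have l: "1 + s + s\<^sup>2 / 2 \<le> exp s" by (rule exp_lower_Taylor_quadratic) (rule s0)
  then have l2: "2 + 2 * s + s\<^sup>2 \<le> 2 * exp s" by simp
  have "(1 - s + s\<^sup>2) * (2 + 2 * s + s\<^sup>2) = 2 + s\<^sup>2 + s^3 + s^4"
    by (simp add: algebra_simps power2_eq_square power3_eq_cube power4_eq_xxxx)
  also have "\<dots> \<ge> 2" using s0 by simp
  finally have "2 \<le> (1 - s + s\<^sup>2) * (2 + 2 * s + s\<^sup>2)" .
  moreover have c0: "0 \<le> 1 - s + s\<^sup>2"
  proof -
    have "4 * (1 - s + s\<^sup>2) = (2 * s - 1)\<^sup>2 + 3" by (simp add: power2_eq_square algebra_simps)
    moreover have "0 \<le> (2 * s - 1)\<^sup>2" by simp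
    ultimately have "0 \<le> 4 * (1 - s + s\<^sup>2)" by (simp only:)
    then show ?thesis by simp
  qed
  moreover have "(1 - s + s\<^sup>2) * (2 + 2 * s + s\<^sup>2) \<le> (1 - s + s\<^sup>2) * (2 * exp s)"
    by (rule mult_left_mono[OF l2 c0])
  ultimately have k: "1 \<le> (1 - s + s\<^sup>2) * exp s" by simp
  have "exp (-s) = exp (-s) * 1" by simp
  also have "\<dots> \<le> exp (-s) * ((1 - s + s\<^sup>2) * exp s)"
    by (rule mult_left_mono[OF k]) simp
  also have "\<dots> = (1 - s + s\<^sup>2) * (exp s * exp (-s))" by (simp only: ac_simps)
  also have "\<dots> = 1 - s + s\<^sup>2" by (simp add: exp_minus_inverse)
  finally show ?thesis using s_def by simp
qed
lemma aux_abs: fixes A B :: real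
  assumes "0 \<le> A" "A \<le> 1" "0 \<le> B" "B \<le> 1"
  shows "\<bar>- (3/8) * (A - B)\<bar> \<le> 1"
  using assms by (simp add: abs_le_iff)

lemma ptwise:
  fixes a p :: real
  assumes a: "0 \<le> a" "a \<le> 1" and p: "0 \<le> p" "p \<le> 1"
  shows "(1 - p) * exp (- (3/8) * ((a - 0)\<^sup>2 - (p - 0)\<^sup>2))
       + p * exp (- (3/8) * ((a - 1)\<^sup>2 - (p - 1)\<^sup>2)) \<le> 1 - 3/16 * (a - p)\<^sup>2"
proof -
  define t0 where "t0 = - (3/8) * ((a - 0)\<^sup>2 - (p - 0)\<^sup>2)"
  define t1 where "t1 = - (3/8) * ((a - 1)\<^sup>2 - (p - 1)\<^sup>2)"
  have sq01: "0 \<le> x\<^sup>2" "x\<^sup>2 \<le> 1" if "\<bar>x\<bar> \<le> 1" for x :: real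
    using that by (simp_all add: abs_square_le_1)
  have h1: "\<bar>a - 0\<bar> \<le> 1" and h2: "\<bar>p - 0\<bar> \<le> 1" and h3: "\<bar>a - 1\<bar> \<le> 1" and h4: "\<bar>p - 1\<bar> \<le> 1" using a p by auto
  have "\<bar>t0\<bar> \<le> 1" unfolding t0_def
    using aux_abs[OF sq01(1)[OF h1] sq01(2)[OF h1] sq01(1)[OF h2] sq01(2)[OF h2]] .
  moreover have "\<bar>t1\<bar> \<le> 1" unfolding t1_def
    using aux_abs[OF sq01(1)[OF h3] sq01(2)[OF h3] sq01(1)[OF h4] sq01(2)[OF h4]] .
  ultimately have e0: "exp t0 \<le> 1 + t0 + t0\<^sup>2" and e1: "exp t1 \<le> 1 + t1 + t1\<^sup>2"
    by (auto intro: exp_le_quad)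
  have "(1 - p) * exp t0 + p * exp t1 \<le> (1 - p) * (1 + t0 + t0\<^sup>2) + p * (1 + t1 + t1\<^sup>2)"
    by (intro add_mono mult_left_mono e0 e1) (use p in auto)
  also have "\<dots> = 1 - 3/8 * (a - p)\<^sup>2 + 9/64 * ((a - p)\<^sup>2 * ((a - p)\<^sup>2 + 4 * p - 4 * p\<^sup>2))"
    unfolding t0_def t1_def by algebra
  also have "\<dots> \<le> 1 - 3/8 * (a - p)\<^sup>2 + 9/64 * ((a - p)\<^sup>2 * (4/3))"
  proof -
    have "(a - p)\<^sup>2 + 4 * p - 4 * p\<^sup>2 \<le> 4/3"
    proof (cases "a \<le> p")
      case True
      then have "(p - a)\<^sup>2 \<le> p\<^sup>2" using a p by (intro power_mono) auto
      then have "(a - p)\<^sup>2 \<le> p\<^sup>2" by (simp add: power2_commute)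
      moreover have "p\<^sup>2 + 4 * p - 4 * p\<^sup>2 \<le> 4/3" 
        using sum_squares_ge_zero[of "3*p - 2" 0] by (simp add: power2_eq_square algebra_simps)
      ultimately show ?thesis by linarith
    next
      case False
      then have "(a - p)\<^sup>2 \<le> (1 - p)\<^sup>2" using a p by (intro power_mono) auto
      moreover have "(1 - p)\<^sup>2 + 4 * p - 4 * p\<^sup>2 \<le> 4/3" 
        using sum_squares_ge_zero[of "3*p - 1" 0] by (simp add: power2_eq_square algebra_simps)
      ultimately show ?thesis by linarith
    qed
    then have "(a - p)\<^sup>2 * ((a - p)\<^sup>2 + 4 * p - 4 * p\<^sup>2) \<le> (a - p)\<^sup>2 * (4/3)"
      by (intro mult_left_mono) auto
    then show ?thesis by linarith
  qed
  also have "\<dots> = 1 - 3/16 * (a - p)\<^sup>2" by simp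
  finally show ?thesis unfolding t0_def t1_def .
qed

lemma ln2_ge: "3/8 \<le> ln (2::real)"
proof -
  have "exp (3/8::real) \<le> 1 + 3/8 + (3/8)\<^sup>2" by (rule exp_bound) auto
  also have "\<dots> \<le> 2" by (simp add: power2_eq_square)
  finally have "exp (3/8::real) \<le> 2" .
  then show ?thesis by (subst ln_ge_iff) auto
qed

lemma approx_sq:
  fixes a b c e :: real
  assumes "0 \<le> a" "a \<le> 1" "0 \<le> b" "b \<le> 1" "0 \<le> c" "c \<le> 1" "\<bar>a - b\<bar> \<le> e"
  shows "(a - c)\<^sup>2 \<le> (b - c)\<^sup>2 + 2 * e"
proof -
  have "(a - c)\<^sup>2 - (b - c)\<^sup>2 = (a - b) * (a + b - 2 * c)" by (simp add: power2_eq_square algebra_simps)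
  also have "\<dots> \<le> \<bar>a - b\<bar> * \<bar>a + b - 2 * c\<bar>" by (metis abs_ge_self abs_mult)
  also have "\<dots> \<le> e * 2" by (rule mult_mono) (use assms in auto)
  finally show ?thesis by simp
qed

lemma floor_approx:
  fixes w :: real and n :: nat
  assumes "0 \<le> w" "w \<le> 1" "0 < n"
  shows "nat \<lfloor>real n * w\<rfloor> \<le> n" "\<bar>real (nat \<lfloor>real n * w\<rfloor>) / real n - w\<bar> \<le> 1 / real n"
    "0 \<le> real (nat \<lfloor>real n * w\<rfloor>) / real n" "real (nat \<lfloor>real n * w\<rfloor>) / real n \<le> 1"
proof -
  have nw0: "0 \<le> real n * w" using assms by simp
  have nw1: "real n * w \<le> real n" using assms by (simp add: mult_left_le)
  have fl: "real_of_int \<lfloor>real n * w\<rfloor> \<le> real n * w" "real n * w < real_of_int \<lfloor>real n * w\<rfloor> + 1"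
    by linarith+
  have f0: "0 \<le> \<lfloor>real n * w\<rfloor>" using nw0 by simp
  have rn: "real (nat \<lfloor>real n * w\<rfloor>) = real_of_int \<lfloor>real n * w\<rfloor>" using f0 by simp
  have Fle: "real_of_int \<lfloor>real n * w\<rfloor> \<le> real n" using fl nw1 by linarith
  then show "nat \<lfloor>real n * w\<rfloor> \<le> n" using rn by linarith
  have np: "0 < real n" using assms by simp
  have "\<bar>real_of_int \<lfloor>real n * w\<rfloor> - real n * w\<bar> \<le> 1" using fl by linarith
  moreover have "real_of_int \<lfloor>real n * w\<rfloor> / real n - w = (real_of_int \<lfloor>real n * w\<rfloor> - real n * w) / real n"
    using np by (simp add: field_simps)
  ultimately have "\<bar>real_of_int \<lfloor>real n * w\<rfloor> / real n - w\<bar> \<le> 1 / real n"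
    using np by (simp add: abs_divide divide_right_mono)
  then show "\<bar>real (nat \<lfloor>real n * w\<rfloor>) / real n - w\<bar> \<le> 1 / real n" using rn by simp
  show "0 \<le> real (nat \<lfloor>real n * w\<rfloor>) / real n" by simp
  have "real_of_int \<lfloor>real n * w\<rfloor> / real n \<le> real n / real n" using Fle np by (intro divide_right_mono) auto
  then show "real (nat \<lfloor>real n * w\<rfloor>) / real n \<le> 1" using rn np by simp
qed

lemma ln_bound:
  fixes n :: nat assumes "2 \<le> n"
  shows "ln (real n + 1) \<le> 3 * ln (real n)"
proof -
  have n2: "(2::real) \<le> real n" using assms by simp
  have "real n + 1 \<le> real n ^ 3"
  proof -
    have a: "2 * 2 \<le> real n * real n" using n2 by (intro mult_mono) auto
    have "4 * real n \<le> real n * real n * real n" using a n2 by (intro mult_right_mono) auto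
    then show ?thesis using n2 unfolding power3_eq_cube by linarith
  qed
  then have "ln (real n + 1) \<le> ln (real n ^ 3)" using n2 by (subst ln_le_cancel_iff) auto
  also have "\<dots> = 3 * ln (real n)" using n2 by (simp add: ln_realpow)
  finally show ?thesis .
qed
lemma arith1:
  fixes A C L B :: real
  assumes "0 \<le> A" "0 \<le> C" "B = L + C" "3/8 \<le> L"
  shows "1 \<le> 16 * (A + B)"
proof -
  have "16 * (A + B) = 16 * A + 16 * L + 16 * C" using assms(3) by (simp add: algebra_simps)
  then show ?thesis using assms(1,2,4) by linarith
qed
lemma arith2:
  fixes A C L B X Y :: real
  assumes "0 \<le> A" "0 \<le> C" "B = L + C" "3/8 \<le> L" "X \<le> 3 * Y"
  shows "(16/3) * (2 * A + X + 3/4 + C) + 2 \<le> 16 * (A + Y + B)"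
proof -
  have "16 * (A + Y + B) = 16 * A + 16 * Y + 16 * L + 16 * C" using assms(3) by (simp add: algebra_simps)
  moreover have "(16/3) * (2 * A + X + 3/4 + C) + 2 = (32/3) * A + (16/3) * X + 6 + (16/3) * C" by (simp add: algebra_simps)
  ultimately show ?thesis using assms(1,2,4,5) by linarith
qed

lemma divmono:
  fixes U V m :: real
  assumes "U + 2 \<le> V" "0 < m"
  shows "U / m + 2 / m \<le> V / m"
proof -
  have "(U + 2) / m \<le> V / m" using assms by (intro divide_right_mono) auto
  then show ?thesis by (simp only: add_divide_distrib)
qed

locale bmdp =
  fixes mu :: "'s::finite pmf" and T :: "'s \<Rightarrow> 'a::finite \<Rightarrow> 's pmf"
    and q :: "'s \<Rightarrow> 'x pmf" and g :: "'x \<Rightarrow> 's"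
    and Psi :: "('x \<Rightarrow> 'a pmf) set" and h :: nat
  assumes decoder: "\<forall>s x. x \<in> set_pmf (q s) \<longrightarrow> g x = s"
begin

abbreviation "P \<equiv> trans_sample mu T q g Psi h"
abbreviation "PX \<equiv> Pxa mu T q g Psi h"
abbreviation "K \<equiv> obs_trans T q g"
abbreviation "fs \<equiv> fstar mu T q g Psi h"
abbreviation "rh \<equiv> rho mu T q g Psi h"
abbreviation "D \<equiv> contrastive_dist mu T q g Psi h"
definition "Fv x a s' = pmf (T (g x) a) s' / (pmf (T (g x) a) s' + rh s')"

lemma EP:
  fixes k :: "'x \<times> 'a \<times> 'x \<Rightarrow> real"
  assumes "\<And>z. \<bar>k z\<bar> \<le> B"
  shows "measure_pmf.expectation P k =
    measure_pmf.expectation PX (\<lambda>(x, a). measure_pmf.expectation (K x a) (\<lambda>x'. k (x, a, x')))"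
  unfolding trans_sample_eq
  apply (subst int_bind_pmf[where B=B])
  using assms apply simp
  apply (rule arg_cong[where f="measure_pmf.expectation PX"])
  by (auto simp: case_prod_unfold)

lemma EK:
  fixes k :: "'x \<Rightarrow> real"
  assumes "\<And>z. \<bar>k z\<bar> \<le> B"
  shows "measure_pmf.expectation (K x a) k =
    (\<Sum>s'\<in>UNIV. pmf (T (g x) a) s' * measure_pmf.expectation (q s') k)"
  unfolding obs_trans_def
  apply (subst int_bind_pmf[where B=B])
  using assms apply simp
  apply (subst integral_measure_pmf_real[where A=UNIV])
  by (auto simp: mult.commute)

lemma q_supp: "x' \<in> set_pmf (q s') \<Longrightarrow> g x' = s'"
  using decoder by blast

lemma Eq_fs:
  fixes k :: "'x \<Rightarrow> real"
  shows "measure_pmf.expectation (q s') (\<lambda>x'. k x' * fs x a x') =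
     measure_pmf.expectation (q s') k * Fv x a s'"
proof -
  have "measure_pmf.expectation (q s') (\<lambda>x'. k x' * fs x a x') =
     measure_pmf.expectation (q s') (\<lambda>x'. k x' * Fv x a s')"
    apply (rule integral_cong_AE)
    by (auto intro!: AE_pmfI simp: q_supp fstar_def Fv_def)
  then show ?thesis by simp
qed

lemma rho_eq: "rh s = measure_pmf.expectation PX (\<lambda>(x, a). pmf (T (g x) a) s)"
proof -
  have "rh s = measure_pmf.expectation P (indicator {(x, a, x'). g x' = s})"
    unfolding rho_def by simp
  also have "\<dots> = measure_pmf.expectation PX (\<lambda>(x, a). measure_pmf.expectation (K x a)
        (\<lambda>x'. indicator {(x, a, x'). g x' = s} (x, a, x')))"
    by (rule EP[where B=1]) (auto simp: indicator_def)
  also have "\<dots> = measure_pmf.expectation PX (\<lambda>(x, a). pmf (T (g x) a) s)"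
  proof (rule arg_cong[where f="measure_pmf.expectation PX"], rule ext, clarify)
    fix x a
    have "measure_pmf.expectation (K x a) (\<lambda>x'. indicator {(x, a, x'). g x' = s} (x, a, x'))
       = (\<Sum>s'\<in>UNIV. pmf (T (g x) a) s' * measure_pmf.expectation (q s')
            (\<lambda>x'. indicator {(x, a, x'). g x' = s} (x, a, x')))"
      by (rule EK[where B=1]) (auto simp: indicator_def)
    also have "\<dots> = (\<Sum>s'\<in>UNIV. pmf (T (g x) a) s' * (if s' = s then 1 else (0::real)))"
    proof (rule sum.cong[OF refl])
      fix s' 
      have "measure_pmf.expectation (q s') (\<lambda>x'. indicator {(x, a, x'). g x' = s} (x, a, x'))
          = measure_pmf.expectation (q s') (\<lambda>x'. if s' = s then 1 else 0)"
        apply (rule integral_cong_AE)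
        by (auto intro!: AE_pmfI simp: q_supp indicator_def)
      also have "\<dots> = (if s' = s then 1 else (0::real))" by (cases "s' = s") simp_all
      finally have e: "measure_pmf.expectation (q s') (\<lambda>x'. indicator {(x, a, x'). g x' = s} (x, a, x')) = (if s' = s then 1 else (0::real))" .
      show "pmf (T (g x) a) s' * measure_pmf.expectation (q s')
            (\<lambda>x'. indicator {(x, a, x'). g x' = s} (x, a, x')) = pmf (T (g x) a) s' * (if s' = s then 1 else (0::real))"
        by (simp only: e)
    qed
    also have "\<dots> = pmf (T (g x) a) s" by (simp add: if_distrib cong: if_cong)
    finally show "measure_pmf.expectation (K x a) (\<lambda>x'. indicator {(x, a, x'). g x' = s} (x, a, x'))
       = pmf (T (g x) a) s" .
  qed
  finally show ?thesis .
qed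


lemma rh_nonneg: "0 \<le> rh s"
  unfolding rho_def by simp

lemma fs_bounds: "0 \<le> fs x a x'" "fs x a x' \<le> 1"
proof -
  have t: "0 \<le> pmf (T (g x) a) (g x')" by simp
  have r: "0 \<le> rh (g x')" by (rule rh_nonneg)
  show "0 \<le> fs x a x'" unfolding fstar_def using t r by simp
  show "fs x a x' \<le> 1" unfolding fstar_def
  proof (cases "pmf (T (g x) a) (g x') + rh (g x') = 0")
    case False
    then have "0 < pmf (T (g x) a) (g x') + rh (g x')" using t r by linarith
    then show "pmf (T (g x) a) (g x') / (pmf (T (g x) a) (g x') + rh (g x')) \<le> 1"
      using r by (simp add: divide_le_eq_1)
  qed simp
qed

lemma EP_snd:
  fixes k :: "'x \<Rightarrow> real"
  assumes "\<And>z. \<bar>k z\<bar> \<le> B"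
  shows "measure_pmf.expectation P (\<lambda>(x, a, x'). k x') =
    (\<Sum>s'\<in>UNIV. rh s' * measure_pmf.expectation (q s') k)"
proof -
  have B0: "0 \<le> B" using assms[of undefined] by linarith
  have "measure_pmf.expectation P (\<lambda>(x, a, x'). k x') =
    measure_pmf.expectation PX (\<lambda>(x, a). measure_pmf.expectation (K x a) k)"
    by (subst EP[where B=B]) (use assms in auto)
  also have "\<dots> = measure_pmf.expectation PX (\<lambda>z. \<Sum>s'\<in>UNIV.
       (case z of (x, a) \<Rightarrow> pmf (T (g x) a) s') * measure_pmf.expectation (q s') k)"
    by (rule arg_cong[where f="measure_pmf.expectation PX"]) (auto simp: EK[OF assms])
  also have "\<dots> = (\<Sum>s'\<in>UNIV. measure_pmf.expectation PX (\<lambda>z.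
       (case z of (x, a) \<Rightarrow> pmf (T (g x) a) s') * measure_pmf.expectation (q s') k))"
  proof (rule Bochner_Integration.integral_sum)
    fix s' :: 's
    show "integrable (measure_pmf PX) (\<lambda>z. (case z of (x, a) \<Rightarrow> pmf (T (g x) a) s') * measure_pmf.expectation (q s') k)"
    proof (rule int_bounded[where B=B], clarify)
      fix x a
      have e: "\<bar>measure_pmf.expectation (q s') k\<bar> \<le> B" by (rule exp_bounded) (rule assms)
      have p: "0 \<le> pmf (T (g x) a) s'" "pmf (T (g x) a) s' \<le> 1" by (auto simp: pmf_le_1)
      have "pmf (T (g x) a) s' * \<bar>measure_pmf.expectation (q s') k\<bar> \<le> 1 * B"
        by (rule mult_mono) (use e p B0 in auto)
      then show "\<bar>pmf (T (g x) a) s' * measure_pmf.expectation (q s') k\<bar> \<le> B"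
        using p by (simp add: abs_mult)
    qed
  qed
  also have "\<dots> = (\<Sum>s'\<in>UNIV. rh s' * measure_pmf.expectation (q s') k)"
    by (rule sum.cong[OF refl]) (simp add: rho_eq case_prod_unfold)
  finally show ?thesis .
qed

lemma key_id: "pmf (T (g x) a) s' * (1 - Fv x a s') = rh s' * Fv x a s'"
proof -
  have t: "0 \<le> pmf (T (g x) a) s'" by simp
  have r: "0 \<le> rh s'" by (rule rh_nonneg)
  show ?thesis
  proof (cases "pmf (T (g x) a) s' + rh s' = 0")
    case True
    with t r have "pmf (T (g x) a) s' = 0" "rh s' = 0" by linarith+
    then show ?thesis by (simp add: Fv_def)
  next
    case False
    then show ?thesis by (simp add: Fv_def field_simps)
  qed
qed

lemma bayes:
  fixes hh :: "'x \<Rightarrow> 'a \<Rightarrow> 'x \<Rightarrow> real"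
  assumes hb: "\<And>x a x'. \<bar>hh x a x'\<bar> \<le> B"
  shows "measure_pmf.expectation P (\<lambda>(x, a, x'). hh x a x' * (1 - fs x a x')) =
    measure_pmf.expectation P (\<lambda>(x1, a1, x1'). measure_pmf.expectation P
        (\<lambda>(x2, a2, x2'). hh x1 a1 x2' * fs x1 a1 x2'))"
proof -
  have B0: "0 \<le> B" using hb[of undefined undefined undefined] by linarith
  have b1: "\<bar>hh x a x' * (1 - fs x a x')\<bar> \<le> B" for x a x'
  proof -
    have "\<bar>1 - fs x a x'\<bar> \<le> 1" using fs_bounds[of x a x'] by auto
    then have "\<bar>hh x a x'\<bar> * \<bar>1 - fs x a x'\<bar> \<le> B * 1"
      by (intro mult_mono hb B0) auto
    then show ?thesis by (simp add: abs_mult)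
  qed
  have b2: "\<bar>hh x a x' * fs x a x'\<bar> \<le> B" for x a x'
  proof -
    have "\<bar>fs x a x'\<bar> \<le> 1" using fs_bounds[of x a x'] by auto
    then have "\<bar>hh x a x'\<bar> * \<bar>fs x a x'\<bar> \<le> B * 1"
      by (intro mult_mono hb B0) auto
    then show ?thesis by (simp add: abs_mult)
  qed
  have L: "measure_pmf.expectation P (\<lambda>(x, a, x'). hh x a x' * (1 - fs x a x')) =
    measure_pmf.expectation PX (\<lambda>(x, a). \<Sum>s'\<in>UNIV. pmf (T (g x) a) s' *
        (measure_pmf.expectation (q s') (hh x a) * (1 - Fv x a s')))"
  proof -
    have "measure_pmf.expectation P (\<lambda>(x, a, x'). hh x a x' * (1 - fs x a x')) =
      measure_pmf.expectation PX (\<lambda>(x, a). measure_pmf.expectation (K x a) (\<lambda>x'. hh x a x' * (1 - fs x a x')))"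
      by (subst EP[where B=B]) (use b1 in auto)
    also have "\<dots> = measure_pmf.expectation PX (\<lambda>(x, a). \<Sum>s'\<in>UNIV. pmf (T (g x) a) s' *
        (measure_pmf.expectation (q s') (hh x a) * (1 - Fv x a s')))"
    proof (rule arg_cong[where f="measure_pmf.expectation PX"], rule ext, clarify)
      fix x a
      show "measure_pmf.expectation (K x a) (\<lambda>x'. hh x a x' * (1 - fs x a x')) =
        (\<Sum>s'\<in>UNIV. pmf (T (g x) a) s' * (measure_pmf.expectation (q s') (hh x a) * (1 - Fv x a s')))"
      proof (subst EK[where B=B], rule b1, rule sum.cong[OF refl])
        fix s'
        have "measure_pmf.expectation (q s') (\<lambda>x'. hh x a x' * (1 - fs x a x')) =
           measure_pmf.expectation (q s') (\<lambda>x'. hh x a x' - hh x a x' * fs x a x')"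
          by (simp add: algebra_simps)
        also have "\<dots> = measure_pmf.expectation (q s') (hh x a) -
            measure_pmf.expectation (q s') (\<lambda>x'. hh x a x' * fs x a x')"
          by (rule Bochner_Integration.integral_diff) (auto intro: int_bounded hb b2)
        also have "\<dots> = measure_pmf.expectation (q s') (hh x a) * (1 - Fv x a s')"
          by (simp add: Eq_fs algebra_simps)
        finally show "pmf (T (g x) a) s' * measure_pmf.expectation (q s') (\<lambda>x'. hh x a x' * (1 - fs x a x')) =
          pmf (T (g x) a) s' * (measure_pmf.expectation (q s') (hh x a) * (1 - Fv x a s'))" by simp
      qed
    qed
    finally show ?thesis .
  qed
  have R: "measure_pmf.expectation P (\<lambda>(x1, a1, x1'). measure_pmf.expectation P
        (\<lambda>(x2, a2, x2'). hh x1 a1 x2' * fs x1 a1 x2')) =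
      measure_pmf.expectation PX (\<lambda>(x, a). \<Sum>s'\<in>UNIV. rh s' *
        (measure_pmf.expectation (q s') (hh x a) * Fv x a s'))"
  proof -
    have inner: "measure_pmf.expectation P (\<lambda>(x2, a2, x2'). hh x1 a1 x2' * fs x1 a1 x2') =
       (\<Sum>s'\<in>UNIV. rh s' * (measure_pmf.expectation (q s') (hh x1 a1) * Fv x1 a1 s'))" for x1 a1
      by (subst EP_snd[where B=B, of "\<lambda>x'. hh x1 a1 x' * fs x1 a1 x'", simplified])
         (auto simp: b2 Eq_fs)
    have ib: "\<bar>measure_pmf.expectation P (\<lambda>(x2, a2, x2'). hh x1 a1 x2' * fs x1 a1 x2')\<bar> \<le> B" for x1 a1
      by (rule exp_bounded) (auto simp: b2)
    have "measure_pmf.expectation P (\<lambda>(x1, a1, x1'). measure_pmf.expectation P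
        (\<lambda>(x2, a2, x2'). hh x1 a1 x2' * fs x1 a1 x2')) =
      measure_pmf.expectation PX (\<lambda>(x, a). measure_pmf.expectation (K x a) (\<lambda>x'.
         measure_pmf.expectation P (\<lambda>(x2, a2, x2'). hh x a x2' * fs x a x2')))"
      by (subst EP[where B=B]) (use ib in auto)
    also have "\<dots> = measure_pmf.expectation PX (\<lambda>(x, a). \<Sum>s'\<in>UNIV. rh s' *
        (measure_pmf.expectation (q s') (hh x a) * Fv x a s'))"
      by (rule arg_cong[where f="measure_pmf.expectation PX"], rule ext, clarify) (simp add: inner)
    finally show ?thesis .
  qed
  show ?thesis unfolding L R
  proof (rule arg_cong[where f="measure_pmf.expectation PX"], rule ext, clarify, rule sum.cong[OF refl])
    fix x a s'
    have "pmf (T (g x) a) s' * (measure_pmf.expectation (q s') (hh x a) * (1 - Fv x a s')) =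
      measure_pmf.expectation (q s') (hh x a) * (pmf (T (g x) a) s' * (1 - Fv x a s'))"
      by (rule mult.left_commute)
    also have "\<dots> = measure_pmf.expectation (q s') (hh x a) * (rh s' * Fv x a s')"
      by (simp only: key_id)
    also have "\<dots> = rh s' * (measure_pmf.expectation (q s') (hh x a) * Fv x a s')"
      by (rule mult.left_commute)
    finally show "pmf (T (g x) a) s' * (measure_pmf.expectation (q s') (hh x a) * (1 - Fv x a s')) =
      rh s' * (measure_pmf.expectation (q s') (hh x a) * Fv x a s')" .
  qed
qed


lemma D_supp: "z \<in> set_pmf D \<Longrightarrow> snd (snd (snd z)) = 0 \<or> snd (snd (snd z)) = 1"
  by (auto simp: contrastive_dist_def split: prod.splits if_splits)

lemma ED:
  fixes phi :: "'x \<times> 'a \<times> 'x \<times> real \<Rightarrow> real"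
  assumes pb: "\<And>z. \<bar>phi z\<bar> \<le> B"
  shows "measure_pmf.expectation D phi = measure_pmf.expectation P (\<lambda>(x1, a1, x1').
     phi (x1, a1, x1', 1) / 2 + measure_pmf.expectation P (\<lambda>(x2, a2, x2'). phi (x1, a1, x2', 0)) / 2)"
proof -
  have inner: "measure_pmf.expectation (bind_pmf P (\<lambda>(x2, a2, x2').
         map_pmf (\<lambda>b. if b then (x1, a1, x1', 1) else (x1, a1, x2', 0)) (bernoulli_pmf (1/2)))) phi
     = phi (x1, a1, x1', 1) / 2 + measure_pmf.expectation P (\<lambda>(x2, a2, x2'). phi (x1, a1, x2', 0)) / 2"
    for x1 a1 x1'
  proof -
    have "measure_pmf.expectation (bind_pmf P (\<lambda>(x2, a2, x2').
         map_pmf (\<lambda>b. if b then (x1, a1, x1', 1) else (x1, a1, x2', 0)) (bernoulli_pmf (1/2)))) phi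
      = measure_pmf.expectation P (\<lambda>z. measure_pmf.expectation ((\<lambda>(x2, a2, x2').
         map_pmf (\<lambda>b. if b then (x1, a1, x1', 1) else (x1, a1, x2', 0)) (bernoulli_pmf (1/2))) z) phi)"
      by (rule int_bind_pmf[OF pb])
    also have "\<dots> = measure_pmf.expectation P (\<lambda>z. phi (x1, a1, x1', 1) / 2 + phi (x1, a1, snd (snd z), 0) / 2)"
      by (rule arg_cong[where f="measure_pmf.expectation P"]) (auto simp: case_prod_unfold)
    also have "\<dots> = measure_pmf.expectation P (\<lambda>z. phi (x1, a1, x1', 1) / 2) +
         measure_pmf.expectation P (\<lambda>z. phi (x1, a1, snd (snd z), 0) / 2)"
    proof (rule Bochner_Integration.integral_add)
      have pb2: "\<bar>phi z / 2\<bar> \<le> B" for z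
        using pb[of z] abs_ge_zero[of "phi z"] by (simp add: abs_divide)
      show "integrable (measure_pmf P) (\<lambda>z. phi (x1, a1, x1', 1) / 2)" by simp
      show "integrable (measure_pmf P) (\<lambda>z. phi (x1, a1, snd (snd z), 0) / 2)"
        by (rule int_bounded[where B=B]) (rule pb2)
    qed
    also have "\<dots> = phi (x1, a1, x1', 1) / 2 + measure_pmf.expectation P (\<lambda>(x2, a2, x2'). phi (x1, a1, x2', 0)) / 2"
      by (simp add: case_prod_unfold)
    finally show ?thesis .
  qed
  show ?thesis
    unfolding contrastive_dist_def
    apply (subst int_bind_pmf[OF pb])
    apply (rule arg_cong[where f="measure_pmf.expectation P"])
    apply (rule ext, clarify)
    apply (simp only: case_prod_conv inner)
    done
qed


lemma phi_bound:
  fixes A B :: real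
  assumes "0 \<le> A" "A \<le> 1" "0 \<le> B" "B \<le> 1" and that: "c = 0 \<or> c = 1"
  shows "0 \<le> exp (- (3/8) * ((A - c)\<^sup>2 - (B - c)\<^sup>2))"
    "exp (- (3/8) * ((A - c)\<^sup>2 - (B - c)\<^sup>2)) \<le> exp 1"
proof -
  show "0 \<le> exp (- (3/8) * ((A - c)\<^sup>2 - (B - c)\<^sup>2))" by simp
  have h1: "\<bar>A - c\<bar> \<le> 1" "\<bar>B - c\<bar> \<le> 1" using assms that by auto
  have "\<bar>- (3/8) * ((A - c)\<^sup>2 - (B - c)\<^sup>2)\<bar> \<le> 1"
    by (rule aux_abs) (use h1 in \<open>simp_all add: abs_square_le_1\<close>)
  then show "exp (- (3/8) * ((A - c)\<^sup>2 - (B - c)\<^sup>2)) \<le> exp 1" by simp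
qed

lemma lemC:
  fixes f :: "'x \<Rightarrow> 'a \<Rightarrow> 'x \<Rightarrow> real"
  assumes fb: "\<And>x a x'. 0 \<le> f x a x' \<and> f x a x' \<le> 1"
  shows "measure_pmf.expectation D (\<lambda>(x, a, x', y). exp (- (3/8) * ((f x a x' - y)\<^sup>2 - (fs x a x' - y)\<^sup>2)))
     \<le> 1 - 3/16 * measure_pmf.expectation D (\<lambda>(x, a, x', y). (f x a x' - fs x a x')\<^sup>2)"
proof -
  define Bd :: real where "Bd = exp 1"
  have Bd1: "1 \<le> Bd" unfolding Bd_def by simp
  define p1 where "p1 x a x' = exp (- (3/8) * ((f x a x' - 1)\<^sup>2 - (fs x a x' - 1)\<^sup>2))" for x a x'
  define p0 where "p0 x a x' = exp (- (3/8) * ((f x a x' - 0)\<^sup>2 - (fs x a x' - 0)\<^sup>2))" for x a x'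
  define u where "u x a x' = (f x a x' - fs x a x')\<^sup>2" for x a x'
  define hh where "hh x a x' = p0 x a x' - p1 x a x'" for x a x'
  define R where "R x a x' = 1 - 3/16 * u x a x' - (1 - fs x a x') * p0 x a x' - fs x a x' * p1 x a x'" for x a x'
  have fsb: "0 \<le> fs x a x'" "fs x a x' \<le> 1" for x a x' using fs_bounds by auto
  have p1b: "0 \<le> p1 x a x'" "p1 x a x' \<le> Bd" for x a x'
    unfolding p1_def Bd_def using phi_bound[of "f x a x'" "fs x a x'" 1] fb[of x a x'] fsb[of x a x'] by auto
  have p0b: "0 \<le> p0 x a x'" "p0 x a x' \<le> Bd" for x a x'
    unfolding p0_def Bd_def using phi_bound[of "f x a x'" "fs x a x'" 0] fb[of x a x'] fsb[of x a x'] by auto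
  have ub: "0 \<le> u x a x'" "u x a x' \<le> 1" for x a x'
  proof -
    have "\<bar>f x a x' - fs x a x'\<bar> \<le> 1" using fb[of x a x'] fsb[of x a x'] by auto
    then show "0 \<le> u x a x'" "u x a x' \<le> 1" unfolding u_def by (simp_all add: abs_square_le_1)
  qed
  have Rb: "0 \<le> R x a x'" "R x a x' \<le> 1" for x a x'
  proof -
    show "0 \<le> R x a x'"
      using ptwise[of "f x a x'" "fs x a x'"] fb[of x a x'] fsb[of x a x']
      unfolding R_def p0_def p1_def u_def by auto
    have "0 \<le> (1 - fs x a x') * p0 x a x'" using fsb[of x a x'] p0b[of x a x'] by simp
    moreover have "0 \<le> fs x a x' * p1 x a x'" using fsb[of x a x'] p1b[of x a x'] by simp
    ultimately show "R x a x' \<le> 1" unfolding R_def using ub[of x a x'] by linarith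
  qed
  have hhb: "\<bar>hh x a x'\<bar> \<le> Bd" for x a x'
    unfolding hh_def using p0b[of x a x'] p1b[of x a x'] by (simp add: abs_le_iff)
  have hhb1: "\<bar>(1 - fs x a x') * hh x a x'\<bar> \<le> Bd" "\<bar>hh x a x' * fs x a x'\<bar> \<le> Bd" for x a x'
  proof -
    have "\<bar>1 - fs x a x'\<bar> * \<bar>hh x a x'\<bar> \<le> 1 * Bd"
      by (rule mult_mono) (use fsb[of x a x'] hhb[of x a x'] in auto)
    then show "\<bar>(1 - fs x a x') * hh x a x'\<bar> \<le> Bd" by (simp add: abs_mult)
    have "\<bar>fs x a x'\<bar> * \<bar>hh x a x'\<bar> \<le> 1 * Bd"
      by (rule mult_mono) (use fsb[of x a x'] hhb[of x a x'] in auto)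
    then show "\<bar>hh x a x' * fs x a x'\<bar> \<le> Bd" by (simp add: abs_mult mult.commute)
  qed
  define phit where "phit = (\<lambda>(x, a, x', y::real). if y = 1 then p1 x a x' else p0 x a x')"
  define ut where "ut = (\<lambda>(x, a, x', y::real). u x a x')"
  have phitb: "\<bar>phit z\<bar> \<le> Bd" for z
    unfolding phit_def using p0b p1b by (auto simp: case_prod_unfold)
  have utb: "\<bar>ut z\<bar> \<le> 1" for z
    unfolding ut_def using ub by (auto simp: case_prod_unfold)
  have e1: "measure_pmf.expectation D (\<lambda>(x, a, x', y). exp (- (3/8) * ((f x a x' - y)\<^sup>2 - (fs x a x' - y)\<^sup>2)))
      = measure_pmf.expectation D phit"
    apply (rule integral_cong_AE)
      apply simp apply simp
    apply (rule AE_pmfI)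
    using D_supp unfolding phit_def p0_def p1_def by (fastforce simp: case_prod_unfold)
  have e2: "measure_pmf.expectation D (\<lambda>(x, a, x', y). (f x a x' - fs x a x')\<^sup>2) = measure_pmf.expectation D ut"
    unfolding ut_def u_def by simp
  define Psi where "Psi z = 1 - 3/16 * ut z - phit z" for z
  have Psib: "\<bar>Psi z\<bar> \<le> 2 + Bd" for z
    unfolding Psi_def using phitb[of z] utb[of z] by (simp add: abs_le_iff)
  have e3: "measure_pmf.expectation D Psi = 1 - 3/16 * measure_pmf.expectation D ut - measure_pmf.expectation D phit"
  proof -
    have i1: "integrable (measure_pmf D) ut" by (rule int_bounded[OF utb])
    have i2: "integrable (measure_pmf D) phit" by (rule int_bounded[OF phitb])
    have "measure_pmf.expectation D Psi = measure_pmf.expectation D (\<lambda>z. 1 - 3/16 * ut z) - measure_pmf.expectation D phit"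
      unfolding Psi_def by (rule Bochner_Integration.integral_diff) (use i1 i2 in auto)
    also have "measure_pmf.expectation D (\<lambda>z. 1 - 3/16 * ut z) = 1 - measure_pmf.expectation D (\<lambda>z. 3/16 * ut z)"
      by (subst Bochner_Integration.integral_diff) (use i1 in auto)
    finally show ?thesis by simp
  qed
  have e4: "measure_pmf.expectation D Psi = measure_pmf.expectation P (\<lambda>(x1, a1, x1').
     (R x1 a1 x1' + (1 - fs x1 a1 x1') * hh x1 a1 x1') / 2 +
      measure_pmf.expectation P (\<lambda>(x2, a2, x2'). R x1 a1 x2' - hh x1 a1 x2' * fs x1 a1 x2') / 2)"
    apply (subst ED[OF Psib])
    apply (rule arg_cong[where f="measure_pmf.expectation P"], rule ext, clarify)
    apply (simp add: Psi_def phit_def ut_def R_def hh_def algebra_simps)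
    done
  define G1 where "G1 = (\<lambda>(x1, a1, x1'). R x1 a1 x1' / 2 +
      measure_pmf.expectation P (\<lambda>(x2, a2, x2'). R x1 a1 x2') / 2)"
  define G2 where "G2 = (\<lambda>(x1, a1, x1'). (1 - fs x1 a1 x1') * hh x1 a1 x1' / 2 -
      measure_pmf.expectation P (\<lambda>(x2, a2, x2'). hh x1 a1 x2' * fs x1 a1 x2') / 2)"
  have Rb': "\<bar>R x a x'\<bar> \<le> 1" for x a x' using Rb[of x a x'] by simp
  have e5: "measure_pmf.expectation D Psi = measure_pmf.expectation P (\<lambda>z. G1 z + G2 z)"
  proof -
    have "measure_pmf.expectation P (\<lambda>(x2, a2, x2'). R x1 a1 x2' - hh x1 a1 x2' * fs x1 a1 x2') =
      measure_pmf.expectation P (\<lambda>(x2, a2, x2'). R x1 a1 x2') - measure_pmf.expectation P (\<lambda>(x2, a2, x2'). hh x1 a1 x2' * fs x1 a1 x2')" for x1 a1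
      unfolding case_prod_unfold
      by (rule Bochner_Integration.integral_diff) (auto intro: int_bounded Rb' hhb1)
    then show ?thesis unfolding e4 G1_def G2_def
      by (intro arg_cong[where f="measure_pmf.expectation P"] ext) (auto simp: algebra_simps diff_divide_distrib add_divide_distrib)
  qed
  have G1b: "\<bar>G1 z\<bar> \<le> 1" for z
  proof -
    obtain x1 a1 x1' where z: "z = (x1, a1, x1')" by (cases z) auto
    have "\<bar>measure_pmf.expectation P (\<lambda>(x2, a2, x2'). R x1 a1 x2')\<bar> \<le> 1"
      by (rule exp_bounded) (auto simp: case_prod_unfold Rb')
    then show ?thesis using Rb'[of x1 a1 x1'] unfolding z G1_def by (simp add: abs_le_iff)
  qed
  have G2b: "\<bar>G2 z\<bar> \<le> Bd" for z
  proof -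
    obtain x1 a1 x1' where z: "z = (x1, a1, x1')" by (cases z) auto
    have "\<bar>measure_pmf.expectation P (\<lambda>(x2, a2, x2'). hh x1 a1 x2' * fs x1 a1 x2')\<bar> \<le> Bd"
      by (rule exp_bounded) (auto simp: case_prod_unfold hhb1)
    then show ?thesis using hhb1(1)[of x1 a1 x1'] unfolding z G2_def by (simp add: abs_le_iff)
  qed
  have e6: "measure_pmf.expectation P (\<lambda>z. G1 z + G2 z) = measure_pmf.expectation P G1 + measure_pmf.expectation P G2"
    by (rule Bochner_Integration.integral_add) (auto intro: int_bounded G1b G2b)
  have e7: "measure_pmf.expectation P G2 = 0"
  proof -
    have "measure_pmf.expectation P G2 = measure_pmf.expectation P (\<lambda>(x, a, x'). hh x a x' * (1 - fs x a x')) / 2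
       - measure_pmf.expectation P (\<lambda>(x1, a1, x1'). measure_pmf.expectation P
        (\<lambda>(x2, a2, x2'). hh x1 a1 x2' * fs x1 a1 x2')) / 2"
    proof -
      have "measure_pmf.expectation P G2 = measure_pmf.expectation P (\<lambda>z. (\<lambda>(x, a, x'). hh x a x' * (1 - fs x a x')) z / 2
         - (\<lambda>(x1, a1, x1'). measure_pmf.expectation P
        (\<lambda>(x2, a2, x2'). hh x1 a1 x2' * fs x1 a1 x2')) z / 2)"
        unfolding G2_def by (intro arg_cong[where f="measure_pmf.expectation P"] ext) (auto simp: mult.commute)
      also have "\<dots> = measure_pmf.expectation P (\<lambda>z. (\<lambda>(x, a, x'). hh x a x' * (1 - fs x a x')) z / 2)
         - measure_pmf.expectation P (\<lambda>z. (\<lambda>(x1, a1, x1'). measure_pmf.expectation P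
        (\<lambda>(x2, a2, x2'). hh x1 a1 x2' * fs x1 a1 x2')) z / 2)"
      proof (rule Bochner_Integration.integral_diff)
        show "integrable (measure_pmf P) (\<lambda>z. (\<lambda>(x, a, x'). hh x a x' * (1 - fs x a x')) z / 2)"
        proof -
          have hb3: "\<bar>hh x a x' * (1 - fs x a x')\<bar> \<le> Bd * 2" for x a x'
            using hhb1(1)[of x a x'] Bd1 by (simp add: mult.commute)
          show ?thesis by (rule int_bounded[where B=Bd]) (auto simp: case_prod_unfold hb3)
        qed
        show "integrable (measure_pmf P) (\<lambda>z. (\<lambda>(x1, a1, x1'). measure_pmf.expectation P
        (\<lambda>(x2, a2, x2'). hh x1 a1 x2' * fs x1 a1 x2')) z / 2)"
        proof -
          have hb5: "\<bar>measure_pmf.expectation P (\<lambda>(x2, a2, x2'). hh x1 a1 x2' * fs x1 a1 x2')\<bar> \<le> Bd" for x1 a1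
            by (rule exp_bounded) (auto simp: case_prod_unfold hhb1)
          show ?thesis
            apply (rule int_bounded[where B=Bd])
            subgoal for z
            proof (cases z)
              case (fields x1 a1 x1')
              then show ?thesis using hb5[of x1 a1] Bd1 by (simp; linarith)
            qed
            done
        qed
      qed
      finally show ?thesis by simp
    qed
    also have "\<dots> = 0" using bayes[of hh Bd] hhb by simp
    finally show ?thesis .
  qed
  have e8: "0 \<le> measure_pmf.expectation P G1"
  proof (rule Bochner_Integration.integral_nonneg, clarify)
    fix x1 a1 x1'
    have "0 \<le> measure_pmf.expectation P (\<lambda>(x2, a2, x2'). R x1 a1 x2')"
      by (rule Bochner_Integration.integral_nonneg) (auto simp: Rb)
    then show "0 \<le> G1 (x1, a1, x1')" unfolding G1_def using Rb(1)[of x1 a1 x1'] by simp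
  qed
  have "0 \<le> measure_pmf.expectation D Psi" using e5 e6 e7 e8 by simp
  then show ?thesis using e1 e2 e3 by simp
qed


lemma tail:
  fixes f :: "'x \<Rightarrow> 'a \<Rightarrow> 'x \<Rightarrow> real" and n :: nat
  assumes fb: "\<And>x a x'. 0 \<le> f x a x' \<and> f x a x' \<le> 1"
  shows "measure_pmf.prob (Pi_pmf {..<n} undefined (\<lambda>_. D)) {S. emp_risk f n S \<le> emp_risk fs n S + 2}
    \<le> exp (3/4) * exp (- (3/16) * real n * measure_pmf.expectation D (\<lambda>(x, a, x', y). (f x a x' - fs x a x')\<^sup>2))"
proof -
  define Q where "Q = Pi_pmf {..<n} undefined (\<lambda>_. D)"
  define dd where "dd = measure_pmf.expectation D (\<lambda>(x, a, x', y). (f x a x' - fs x a x')\<^sup>2)"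
  define z where "z = (\<lambda>(x, a, x', y). (f x a x' - y)\<^sup>2 - (fs x a x' - y)\<^sup>2)"
  define ez where "ez = (\<lambda>v. exp (- (3/8) * z v))"
  have ez_eq: "ez = (\<lambda>(x, a, x', y). exp (- (3/8) * ((f x a x' - y)\<^sup>2 - (fs x a x' - y)\<^sup>2)))"
    unfolding ez_def z_def by (auto simp: case_prod_unfold)
  have fsb: "0 \<le> fs x a x'" "fs x a x' \<le> 1" for x a x' using fs_bounds by auto
  have ez_int: "integrable (measure_pmf D) ez"
  proof (rule measure_pmf.integrable_const_bound[where B="exp 1"])
    show "AE v in measure_pmf D. norm (ez v) \<le> exp 1"
    proof (rule AE_pmfI)
      fix v assume v: "v \<in> set_pmf D"
      obtain x a x' y where vv: "v = (x, a, x', y)" by (cases v) auto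
      have "y = 0 \<or> y = 1" using D_supp[OF v] vv by simp
      then show "norm (ez v) \<le> exp 1"
        unfolding ez_eq vv using phi_bound[of "f x a x'" "fs x a x'" y] fb[of x a x'] fsb[of x a x'] by auto
    qed
  qed (simp)
  have ez_nonneg: "0 \<le> ez v" for v unfolding ez_def by simp
  have EDez: "measure_pmf.expectation D ez \<le> 1 - 3/16 * dd"
    unfolding ez_eq dd_def by (rule lemC[OF fb])
  have EDez0: "0 \<le> measure_pmf.expectation D ez"
    by (rule Bochner_Integration.integral_nonneg) (simp add: ez_nonneg)
  have emp_diff: "emp_risk f n S - emp_risk fs n S = (\<Sum>i<n. z (S i))" for S
    unfolding emp_risk_def z_def by (simp add: sum_subtractf case_prod_unfold)
  have prod_eq: "exp (- (3/8) * (emp_risk f n S - emp_risk fs n S)) = (\<Prod>i\<in>{..<n}. ez (S i))" for S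
    unfolding emp_diff ez_def by (simp add: sum_distrib_left exp_sum)
  have int_prod: "integrable (measure_pmf Q) (\<lambda>S. \<Prod>i\<in>{..<n}. ez (S i))"
    unfolding Q_def by (rule integrable_prod_Pi_pmf) (auto intro: ez_int)
  have EQ: "measure_pmf.expectation Q (\<lambda>S. \<Prod>i\<in>{..<n}. ez (S i)) = (measure_pmf.expectation D ez) ^ n"
    unfolding Q_def by (subst expectation_prod_Pi_pmf) (auto intro: ez_int ez_nonneg)
  have pow: "(measure_pmf.expectation D ez) ^ n \<le> exp (- (3/16) * real n * dd)"
  proof -
    have "(measure_pmf.expectation D ez) ^ n \<le> (exp (- (3/16) * dd)) ^ n"
    proof (rule power_mono[OF _ EDez0])
      have "1 + (- (3/16) * dd) \<le> exp (- (3/16) * dd)" by (rule exp_ge_add_one_self)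
      then show "measure_pmf.expectation D ez \<le> exp (- (3/16) * dd)" using EDez by simp
    qed
    also have "\<dots> = exp (- (3/16) * real n * dd)" by (simp add: exp_of_nat_mult[symmetric] algebra_simps)
    finally show ?thesis .
  qed
  have ind: "indicator {S. emp_risk f n S \<le> emp_risk fs n S + 2} S \<le> exp (3/4) * (\<Prod>i\<in>{..<n}. ez (S i))" for S
  proof (cases "emp_risk f n S \<le> emp_risk fs n S + 2")
    case True
    then have "- (3/4) \<le> - (3/8) * (emp_risk f n S - emp_risk fs n S)" by simp
    then have "exp (- (3/4)) \<le> exp (- (3/8) * (emp_risk f n S - emp_risk fs n S))" by simp
    then have "exp (3/4) * exp (- (3/4)) \<le> exp (3/4) * (\<Prod>i\<in>{..<n}. ez (S i))"
      unfolding prod_eq by (rule mult_left_mono) simp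
    moreover have "exp (3/4) * exp (- (3/4)) = (1::real)" by (simp add: exp_minus_inverse)
    ultimately show ?thesis using True by simp
  next
    case False
    then show ?thesis by (simp add: prod_nonneg ez_nonneg)
  qed
  have "measure_pmf.prob Q {S. emp_risk f n S \<le> emp_risk fs n S + 2} =
     measure_pmf.expectation Q (indicator {S. emp_risk f n S \<le> emp_risk fs n S + 2})"
    by simp
  also have "\<dots> \<le> measure_pmf.expectation Q (\<lambda>S. exp (3/4) * (\<Prod>i\<in>{..<n}. ez (S i)))"
  proof (rule integral_mono)
    show "integrable (measure_pmf Q) (indicator {S. emp_risk f n S \<le> emp_risk fs n S + 2} :: _ \<Rightarrow> real)"
      by (rule int_bounded[where B=1]) (simp add: indicator_def)
    show "integrable (measure_pmf Q) (\<lambda>S. exp (3/4) * (\<Prod>i\<in>{..<n}. ez (S i)))"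
      using int_prod by simp
    show "(indicator {S. emp_risk f n S \<le> emp_risk fs n S + 2} S :: real) \<le> exp (3/4) * (\<Prod>i\<in>{..<n}. ez (S i))" for S
      by (rule ind)
  qed
  also have "\<dots> = exp (3/4) * (measure_pmf.expectation D ez) ^ n" by (simp add: EQ)
  also have "\<dots> \<le> exp (3/4) * exp (- (3/16) * real n * dd)" by (rule mult_left_mono[OF pow]) simp
  finally show ?thesis unfolding Q_def dd_def .
qed

end

theorem mainTheorem12:
  fixes H h N n :: nat
    and mu :: "'s::finite pmf"
    and T :: "'s \<Rightarrow> 'a::finite \<Rightarrow> 's pmf"
    and q :: "'s \<Rightarrow> 'x::countable pmf"
    and g :: "'x \<Rightarrow> 's"
    and ls :: "'s \<Rightarrow> nat" and lx :: "'x \<Rightarrow> nat"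
    and Psi :: "('x \<Rightarrow> 'a pmf) set" and alpha :: real
    and Phi :: "('x \<Rightarrow> nat) set"
    and delta :: real
  assumes H2: "2 \<le> H"
    and ls_range: "\<forall>s. 1 \<le> ls s \<and> ls s \<le> H"
    and lx_range: "\<forall>x. 1 \<le> lx x \<and> lx x \<le> H"
    and mu_layer: "set_pmf mu \<subseteq> {s. ls s = 1}"
    and T_layer: "\<forall>s a. ls s < H \<longrightarrow> set_pmf (T s a) \<subseteq> {s'. ls s' = ls s + 1}"
    and q_layer: "\<forall>s. set_pmf (q s) \<subseteq> {x. lx x = ls s}"
    and decoder: "\<forall>s x. x \<in> set_pmf (q s) \<longrightarrow> g x = s"
    and decoder_layer: "\<forall>x. ls (g x) = lx x"
    and h_range: "2 \<le> h" "h \<le> H"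
    and Psi_fin: "finite Psi" and Psi_ne: "Psi \<noteq> {}"
    and alpha_pos: "0 < alpha"
    and cover: "policy_cover mu T q g ls Psi alpha (h - 1)"
    and Phi_fin: "finite Phi"
    and Phi_range: "\<forall>phi\<in>Phi. \<forall>x. phi x < N"
    and N_ge: "N_KD H T q g lx \<le> N"
    and realizable: "fstar mu T q g Psi h \<in> F_set N Phi"
    and delta: "0 < delta" "delta < 1"
    and n_pos: "1 \<le> n"
  shows "measure_pmf.prob (Pi_pmf {..<n} undefined (\<lambda>_. contrastive_dist mu T q g Psi h))
     {S. \<forall>f\<in>F_set N Phi. (\<forall>f'\<in>F_set N Phi. emp_risk f n S \<le> emp_risk f' n S) \<longrightarrow>
          measure_pmf.expectation (contrastive_dist mu T q g Psi h)
            (\<lambda>(x, a, x', y). (f x a x' - fstar mu T q g Psi h x a x')\<^sup>2)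
          \<le> 16 * (ln (real (card Phi)) + real N ^ 2 * real CARD('a) * ln (real n)
                  + ln (2 / delta)) / real n}
   \<ge> 1 - delta"
proof -
  interpret bmdp mu T q g Psi h by unfold_locales (rule decoder)
  define dd where "dd f = measure_pmf.expectation D (\<lambda>(x, a, x', y). (f x a x' - fs x a x')\<^sup>2)"
    for f :: "'x \<Rightarrow> 'a \<Rightarrow> 'x \<Rightarrow> real"
  define Del where "Del = 16 * (ln (real (card Phi)) + real N ^ 2 * real CARD('a) * ln (real n)
                  + ln (2 / delta)) / real n"
  define Q where "Q = Pi_pmf {..<n} undefined (\<lambda>_. D)"
  define Bad where "Bad = {S. \<exists>f\<in>F_set N Phi. (\<forall>f'\<in>F_set N Phi. emp_risk f n S \<le> emp_risk f' n S) \<and> Del < dd f}"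
  have Fb: "0 \<le> f x a x' \<and> f x a x' \<le> 1" if fF0: "f \<in> F_set N Phi" for f x a x'
  proof -
    obtain w phiF phiB where w: "w \<in> W_set N" "phiF \<in> Phi" "phiB \<in> Phi" and f: "f = (\<lambda>x a x'. w (phiF x) a (phiB x'))"
      using fF0 unfolding F_set_def by blast
    have "phiF x < N" "phiB x' < N" using Phi_range w by auto
    then show ?thesis using w(1) unfolding f W_set_def by auto
  qed
  have fsF: "fs \<in> F_set N Phi" using realizable by simp
  have PhiNE: "Phi \<noteq> {}" using fsF unfolding F_set_def by auto
  have cPhi: "1 \<le> card Phi" using Phi_fin PhiNE by (simp add: Suc_le_eq card_gt_0_iff)
  have lnPhi: "0 \<le> ln (real (card Phi))" using cPhi by simp
  have lnd: "0 \<le> ln (1 / delta)" using delta by simp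
  have ln2d: "ln (2 / delta) = ln 2 + ln (1 / delta)" using delta by (simp add: ln_div)
  have fsb: "0 \<le> fs x a x'" "fs x a x' \<le> 1" for x a x' using fs_bounds by auto
  have n0: "0 < n" using n_pos by simp
  have setq: "{S. \<forall>f\<in>F_set N Phi. (\<forall>f'\<in>F_set N Phi. emp_risk f n S \<le> emp_risk f' n S) \<longrightarrow> dd f \<le> Del}
     = UNIV - Bad" unfolding Bad_def by (auto simp: not_less)
  have main: "1 - delta \<le> measure_pmf.prob Q (UNIV - Bad)"
  proof (cases "n = 1")
    case True
    have dd1: "dd f \<le> 1" if "f \<in> F_set N Phi" for f
    proof -
      have "dd f \<le> measure_pmf.expectation D (\<lambda>z. 1)" unfolding dd_def
      proof (rule integral_mono)
        have b: "\<bar>(f x a x' - fs x a x')\<^sup>2\<bar> \<le> 1" for x a x'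
        proof -
          have "\<bar>f x a x' - fs x a x'\<bar> \<le> 1" using Fb[OF that, of x a x'] fsb[of x a x'] by auto
          then show ?thesis by (simp add: abs_square_le_1)
        qed
        have b3: "(f x a x' - fs x a x')\<^sup>2 \<le> 1" for x a x' using b[of x a x'] by simp
        show "integrable (measure_pmf D) (\<lambda>(x, a, x', y). (f x a x' - fs x a x')\<^sup>2)"
          by (rule int_bounded[where B=1]) (auto simp: case_prod_unfold b3)
        show "(case z of (x, a, x', y) \<Rightarrow> (f x a x' - fs x a x')\<^sup>2) \<le> 1" for z
        proof -
          have b2: "(f x a x' - fs x a x')\<^sup>2 \<le> 1" for x a x' using b[of x a x'] by simp
          show ?thesis using b2 by (auto simp: case_prod_unfold)
        qed
      qed simp
      then show ?thesis by simp
    qed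
    have "1 \<le> Del"
    proof -
      have "Del = 16 * (ln (real (card Phi)) + ln (2 / delta))" unfolding Del_def using True by simp
      moreover have "1 \<le> 16 * (ln (real (card Phi)) + ln (2 / delta))"
        by (rule arith1[OF lnPhi lnd ln2d ln2_ge])
      ultimately show ?thesis by simp
    qed
    then have "Bad = {}" unfolding Bad_def using dd1 by force
    then show ?thesis using delta by simp
  next
    case False
    then have n2: "2 \<le> n" using n_pos by simp
    define KK where "KK = N * CARD('a) * N"
    define Vals where "Vals = (\<lambda>k. real k / real n) ` {0..n}"
    define Cells where "Cells = {..<N} \<times> (UNIV::'a set) \<times> {..<N}"
    define G where "G = (\<lambda>(W, pF, pB). (\<lambda>x a x'. W (pF x, a, pB x'))) ` (PiE Cells (\<lambda>_. Vals) \<times> Phi \<times> Phi)"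
    define D0 where "D0 = (16/3) * (2 * ln (real (card Phi)) + real KK * ln (real n + 1) + 3/4 + ln (1 / delta)) / real n"
    define G' where "G' = {g\<in>G. D0 < dd g}"
    define BB where "BB g = {S. emp_risk g n S \<le> emp_risk fs n S + 2}" for g
    have finVals: "finite Vals" unfolding Vals_def by simp
    have finCells: "finite Cells" unfolding Cells_def by simp
    have finG: "finite G" unfolding G_def using finVals finCells Phi_fin by (simp add: finite_PiE)
    have cardG: "real (card G) \<le> real (card Phi) ^ 2 * real (n + 1) ^ KK"
    proof -
      have "card G \<le> card (PiE Cells (\<lambda>_. Vals) \<times> Phi \<times> Phi)" unfolding G_def by (rule card_image_le) (simp add: finVals finCells Phi_fin finite_PiE)
      also have "\<dots> = card Vals ^ card Cells * (card Phi * card Phi)"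
        by (simp add: card_cartesian_product card_PiE finCells)
      also have "\<dots> \<le> (n + 1) ^ KK * (card Phi * card Phi)"
      proof -
        have "card Vals \<le> n + 1" unfolding Vals_def using card_image_le[of "{0..n}" "\<lambda>k. real k / real n"] by simp
        moreover have "card Cells = KK" unfolding Cells_def KK_def by (simp add: card_cartesian_product)
        ultimately show ?thesis by (simp add: power_mono)
      qed
      finally have "card G \<le> (n + 1) ^ KK * (card Phi * card Phi)" .
      then have "real (card G) \<le> real ((n + 1) ^ KK * (card Phi * card Phi))" by linarith
      then show ?thesis by (simp add: power2_eq_square mult.commute)
    qed
    have Gb: "0 \<le> gg x a x' \<and> gg x a x' \<le> 1" if ggG0: "gg \<in> G" for gg x a x'
    proof -
      obtain W pF pB where W: "W \<in> PiE Cells (\<lambda>_. Vals)" "pF \<in> Phi" "pB \<in> Phi" and gg: "gg = (\<lambda>x a x'. W (pF x, a, pB x'))"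
        using ggG0 unfolding G_def by auto
      have "(pF x, a, pB x') \<in> Cells" unfolding Cells_def using Phi_range W by auto
      then have "W (pF x, a, pB x') \<in> Vals" using W(1) by auto
      then obtain k where k: "k \<le> n" "W (pF x, a, pB x') = real k / real n" unfolding Vals_def by auto
      have "real k / real n \<le> 1" using k n0 by (simp add: divide_le_eq_1)
      then show ?thesis using k unfolding gg by simp
    qed
    have sub: "AE S in measure_pmf Q. S \<in> Bad \<longrightarrow> S \<in> (\<Union>gg\<in>G'. BB gg)"
    proof (rule AE_pmfI, rule impI)
      fix S assume SQ: "S \<in> set_pmf Q" and SB: "S \<in> Bad"
      have Si: "S i \<in> set_pmf D" if "i < n" for i
        using SQ that unfolding Q_def by (auto simp: set_Pi_pmf PiE_dflt_def)
      obtain f where fF: "f \<in> F_set N Phi" and erm: "\<forall>f'\<in>F_set N Phi. emp_risk f n S \<le> emp_risk f' n S"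
        and fbad: "Del < dd f" using SB unfolding Bad_def by blast
      obtain w phiF phiB where w: "w \<in> W_set N" "phiF \<in> Phi" "phiB \<in> Phi" and f: "f = (\<lambda>x a x'. w (phiF x) a (phiB x'))"
        using fF unfolding F_set_def by blast
      define W where "W = restrict (\<lambda>(i, a, j). real (nat \<lfloor>real n * w i a j\<rfloor>) / real n) Cells"
      define gg where "gg = (\<lambda>x a x'. W (phiF x, a, phiB x'))"
      have WP: "W \<in> PiE Cells (\<lambda>_. Vals)"
      proof -
        have "(\<lambda>(i, a, j). real (nat \<lfloor>real n * w i a j\<rfloor>) / real n) c \<in> Vals" if "c \<in> Cells" for c
        proof -
          obtain i a j where c: "c = (i, a, j)" by (cases c) auto
          have "i < N" "j < N" using that c unfolding Cells_def by auto
          then have "0 \<le> w i a j" "w i a j \<le> 1" using w(1) unfolding W_set_def by auto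
          then have "nat \<lfloor>real n * w i a j\<rfloor> \<le> n" using floor_approx(1) n0 by blast
          then show ?thesis unfolding c Vals_def by auto
        qed
        then show ?thesis unfolding W_def by auto
      qed
      have ggG: "gg \<in> G" unfolding G_def gg_def using WP w by force
      have gapprox: "\<bar>gg x a x' - f x a x'\<bar> \<le> 1 / real n" for x a x'
      proof -
        have c: "(phiF x, a, phiB x') \<in> Cells" unfolding Cells_def using Phi_range w by auto
        then have "0 \<le> w (phiF x) a (phiB x')" "w (phiF x) a (phiB x') \<le> 1" using w(1) unfolding W_set_def Cells_def by auto
        then show ?thesis unfolding gg_def f W_def using c floor_approx(2) n0 by auto
      qed
      have ggb: "0 \<le> gg x a x' \<and> gg x a x' \<le> 1" for x a x' by (rule Gb[OF ggG])
      have fb: "0 \<le> f x a x' \<and> f x a x' \<le> 1" for x a x' by (rule Fb[OF fF])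
      have emp1: "emp_risk gg n S \<le> emp_risk f n S + 2"
      proof -
        have "emp_risk gg n S \<le> (\<Sum>i<n. (case S i of (x, a, x', y) \<Rightarrow> (f x a x' - y)\<^sup>2) + 2 / real n)"
          unfolding emp_risk_def
        proof (rule sum_mono)
          fix i assume "i \<in> {..<n}"
          then have "S i \<in> set_pmf D" using Si by simp
          then obtain x a x' y where Sx: "S i = (x, a, x', y)" and y: "y = 0 \<or> y = 1"
            using D_supp by (metis prod.collapse)
          have "(gg x a x' - y)\<^sup>2 \<le> (f x a x' - y)\<^sup>2 + 2 * (1 / real n)"
            by (rule approx_sq) (use ggb[of x a x'] fb[of x a x'] y gapprox[of x a x'] in auto)
          then show "(case S i of (x, a, x', y) \<Rightarrow> (gg x a x' - y)\<^sup>2) \<le>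
              (case S i of (x, a, x', y) \<Rightarrow> (f x a x' - y)\<^sup>2) + 2 / real n" unfolding Sx by simp
        qed
        also have "\<dots> = emp_risk f n S + 2" unfolding emp_risk_def using n0 by (simp add: sum.distrib)
        finally show ?thesis .
      qed
      have emp2: "emp_risk f n S \<le> emp_risk fs n S" using erm fsF by blast
      have ddfg: "dd f \<le> dd gg + 2 / real n"
      proof -
        have b1: "\<bar>(u x a x' - fs x a x')\<^sup>2\<bar> \<le> 1" if "\<And>x a x'. 0 \<le> u x a x' \<and> u x a x' \<le> 1" for u :: "'x \<Rightarrow> 'a \<Rightarrow> 'x \<Rightarrow> real" and x a x'
        proof -
          have "\<bar>u x a x' - fs x a x'\<bar> \<le> 1" using that[of x a x'] fsb[of x a x'] by auto
          then show ?thesis by (simp add: abs_square_le_1)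
        qed
        have bf: "(f x a x' - fs x a x')\<^sup>2 \<le> 1" for x a x' using b1[of f x a x'] fb by simp
        have bg: "(gg x a x' - fs x a x')\<^sup>2 \<le> 1" for x a x' using b1[of gg x a x'] ggb by simp
        have "dd f \<le> measure_pmf.expectation D (\<lambda>z. (case z of (x, a, x', y) \<Rightarrow> (gg x a x' - fs x a x')\<^sup>2) + 2 / real n)"
          unfolding dd_def
        proof (rule integral_mono)
          show "integrable (measure_pmf D) (\<lambda>(x, a, x', y). (f x a x' - fs x a x')\<^sup>2)"
            by (rule int_bounded[where B=1]) (auto simp: case_prod_unfold bf)
          show "integrable (measure_pmf D) (\<lambda>z. (case z of (x, a, x', y) \<Rightarrow> (gg x a x' - fs x a x')\<^sup>2) + 2 / real n)"
            by (rule Bochner_Integration.integrable_add, rule int_bounded[where B=1]) (auto simp: case_prod_unfold bg)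
          show "(case z of (x, a, x', y) \<Rightarrow> (f x a x' - fs x a x')\<^sup>2) \<le> (case z of (x, a, x', y) \<Rightarrow> (gg x a x' - fs x a x')\<^sup>2) + 2 / real n" for z
          proof -
            obtain x a x' y where z: "z = (x, a, x', y)" by (cases z) auto
            have "\<bar>f x a x' - gg x a x'\<bar> \<le> 1 / real n" using gapprox[of x a x'] by (simp add: abs_minus_commute)
            then have "(f x a x' - fs x a x')\<^sup>2 \<le> (gg x a x' - fs x a x')\<^sup>2 + 2 * (1 / real n)"
              by (intro approx_sq) (use fb[of x a x'] ggb[of x a x'] fsb[of x a x'] in auto)
            then show ?thesis unfolding z by simp
          qed
        qed
        also have "\<dots> = dd gg + 2 / real n" unfolding dd_def
          by (subst Bochner_Integration.integral_add) (auto intro!: int_bounded[where B=1] simp: case_prod_unfold bg)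
        finally show ?thesis .
      qed
      have "Del - 2 / real n \<ge> D0"
      proof -
        have K: "real N ^ 2 * real CARD('a) = real KK" unfolding KK_def by (simp add: power2_eq_square)
        have lnb: "ln (real n + 1) \<le> 3 * ln (real n)" by (rule ln_bound[OF n2])
        have KK0: "0 \<le> real KK" by simp
        have "real KK * ln (real n + 1) \<le> real KK * (3 * ln (real n))" by (rule mult_left_mono[OF lnb KK0])
        also have "\<dots> = 3 * (real N ^ 2 * real CARD('a) * ln (real n))" unfolding K[symmetric] by simp
        finally have XY: "real KK * ln (real n + 1) \<le> 3 * (real N ^ 2 * real CARD('a) * ln (real n))" .
        have "(16/3) * (2 * ln (real (card Phi)) + real KK * ln (real n + 1) + 3/4 + ln (1 / delta)) + 2
            \<le> 16 * (ln (real (card Phi)) + real N ^ 2 * real CARD('a) * ln (real n) + ln (2 / delta))"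
          by (rule arith2[OF lnPhi lnd ln2d ln2_ge XY])
        then have "(16/3) * (2 * ln (real (card Phi)) + real KK * ln (real n + 1) + 3/4 + ln (1 / delta)) / real n + 2 / real n
            \<le> 16 * (ln (real (card Phi)) + real N ^ 2 * real CARD('a) * ln (real n) + ln (2 / delta)) / real n"
          by (rule divmono) (use n0 in simp)
        then show ?thesis unfolding D0_def Del_def by linarith
      qed
      then have "D0 < dd gg" using fbad ddfg by linarith
      then have "gg \<in> G'" unfolding G'_def using ggG by simp
      moreover have "S \<in> BB gg" unfolding BB_def using emp1 emp2 by simp
      ultimately show "S \<in> (\<Union>gg\<in>G'. BB gg)" by blast
    qed
    have "measure_pmf.prob Q Bad \<le> measure_pmf.prob Q (\<Union>gg\<in>G'. BB gg)"
      by (rule measure_pmf.finite_measure_mono_AE[OF sub]) simp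
    also have "\<dots> \<le> (\<Sum>gg\<in>G'. measure_pmf.prob Q (BB gg))"
      by (rule measure_pmf.finite_measure_subadditive_finite) (auto simp: G'_def finG)
    also have "\<dots> \<le> (\<Sum>gg\<in>G'. exp (3/4) * exp (- (3/16) * real n * D0))"
    proof (rule sum_mono)
      fix gg assume gg: "gg \<in> G'"
      then have ggG: "gg \<in> G" and ggd: "D0 < dd gg" unfolding G'_def by auto
      have "measure_pmf.prob Q (BB gg) \<le> exp (3/4) * exp (- (3/16) * real n * dd gg)"
        unfolding Q_def BB_def dd_def by (rule tail) (rule Gb[OF ggG])
      also have "\<dots> \<le> exp (3/4) * exp (- (3/16) * real n * D0)"
        using ggd n0 by (simp add: mult_left_mono)
      finally show "measure_pmf.prob Q (BB gg) \<le> exp (3/4) * exp (- (3/16) * real n * D0)" .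
    qed
    also have "\<dots> = real (card G') * (exp (3/4) * exp (- (3/16) * real n * D0))" by simp
    also have "\<dots> \<le> real (card G) * (exp (3/4) * exp (- (3/16) * real n * D0))"
      by (rule mult_right_mono) (auto simp: G'_def finG card_mono)
    also have "\<dots> \<le> delta"
    proof -
      define L where "L = real (card Phi) ^ 2 * real (n + 1) ^ KK"
      have L0: "0 < L" unfolding L_def using cPhi by simp
      have lnL: "ln L = 2 * ln (real (card Phi)) + real KK * ln (real n + 1)"
        unfolding L_def using cPhi by (simp add: ln_mult ln_realpow add.commute)
      have "(3/16) * real n * D0 = ln L + 3/4 + ln (1 / delta)"
        unfolding D0_def lnL using n0 by (simp add: field_simps)
      then have "- (3/16) * real n * D0 = (- ln L) + (- (3/4)) + (- ln (1 / delta))"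
        by (simp add: algebra_simps)
      then have "exp (- (3/16) * real n * D0) = exp (- ln L) * exp (- (3/4)) * exp (- ln (1 / delta))"
        by (simp only: exp_add)
      also have "\<dots> = (1 / L) * exp (- (3/4)) * delta"
      proof -
        have "exp (- ln L) = 1 / L" using L0 by (simp add: exp_minus exp_ln inverse_eq_divide)
        moreover have "exp (- ln (1 / delta)) = delta" using delta by (simp add: exp_minus exp_ln)
        ultimately show ?thesis by simp
      qed
      finally have e: "exp (- (3/16) * real n * D0) = (1 / L) * exp (- (3/4)) * delta" .
      have "real (card G) * (exp (3/4) * exp (- (3/16) * real n * D0)) = real (card G) / L * delta"
        unfolding e by (simp add: exp_minus field_simps)
      also have "\<dots> \<le> 1 * delta"
        using cardG L0 delta unfolding L_def by (intro mult_right_mono) (auto simp: divide_le_eq_1)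
      finally show ?thesis by simp
    qed
    finally have "measure_pmf.prob Q Bad \<le> delta" .
    moreover have "measure_pmf.prob Q (UNIV - Bad) = 1 - measure_pmf.prob Q Bad"
      using measure_pmf.prob_compl[of Bad Q] by simp
    ultimately show ?thesis by simp
  qed
  then show ?thesis using setq unfolding Q_def dd_def Del_def by simp
qed

end
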